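(* Let $S$ be a Hausdorff countably compact topological semigroup which is algebraically a primitive inverse semigroup, $S=\sum_{i\in\mathscr I}B_{\lambda_i}(G_i)$. Then the family of all sets $S\setminus\big((G_{i_1})_{\alpha_1,\beta_1}\cup\dots\cup(G_{i_k})_{\alpha_k,\beta_k}\big)$, where $k\in\mathbb N$, $i_1,\dots,i_k\in\mathscr I$ and $\alpha_j,\beta_j\in\lambda_{i_j}$, is a base of the topology of $S$ at zero.
   Context: A topological semigroup is a Hausdorff space with jointly continuous associative operation. For a group $G$ and cardinal $\lambda\ge1$, $B_\lambda(G)=(\lambda\times G\times\lambda)\cup\{0\}$ with $(\alpha,a,\beta)(\gamma,b,\delta)=(\alpha,ab,\delta)$ if $\beta=\gamma$ and $0$ otherwise. The orthogonal sum of semigroups $T_\iota$ with zeros is $\{0\}\cup\bigcup_\iota(T_\iota\setminus\{0_\iota\})$ with products computed in $T_\iota$ when both factors lie in the same $T_\iota$ and the product is non-zero, and $0$ otherwise. Primitive inverse semigroups are exactly orthogonal sums $\sum_{i\in\mathscr I}B_{\lambda_i}(G_i)$; we identify $B_{\lambda_i}(G_i)$ with a subsemigroup of $S$ and write $(G_i)_{\alpha,\beta}=\{(\alpha,g,\beta):g\in G_i\}$. *)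

theory Defs
  imports "HOL-Analysis.Analysis" "HOL-Algebra.Group"
begin

text \<open>Orthogonal sum of Brandt semigroups B_{Lambda i}(G i), i in I.
  The zero is None; the element (alpha, g, beta) of B_{Lambda i}(G i) is
  Some (i, alpha, g, beta).\<close>

definition osum_carrier ::
  "'i set \<Rightarrow> ('i \<Rightarrow> 'l set) \<Rightarrow> ('i \<Rightarrow> 'g monoid) \<Rightarrow> ('i \<times> 'l \<times> 'g \<times> 'l) option set" where
  "osum_carrier I Lam G =
     insert None {Some (i, a, g, b) | i a g b. i \<in> I \<and> a \<in> Lam i \<and> b \<in> Lam i \<and> g \<in> carrier (G i)}"

fun osum_mult ::
  "('i \<Rightarrow> 'g monoid) \<Rightarrow> ('i \<times> 'l \<times> 'g \<times> 'l) option \<Rightarrow> ('i \<times> 'l \<times> 'g \<times> 'l) option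
     \<Rightarrow> ('i \<times> 'l \<times> 'g \<times> 'l) option" where
  "osum_mult G (Some (i, a, g, b)) (Some (j, c, h, d)) =
     (if i = j \<and> b = c then Some (i, a, g \<otimes>\<^bsub>G i\<^esub> h, d) else None)"
| "osum_mult G _ _ = None"

definition cell :: "('i \<Rightarrow> 'g monoid) \<Rightarrow> 'i \<Rightarrow> 'l \<Rightarrow> 'l \<Rightarrow> ('i \<times> 'l \<times> 'g \<times> 'l) option set" where
  "cell G i a b = {Some (i, a, g, b) | g. g \<in> carrier (G i)}"

definition countably_compact_space :: "'a topology \<Rightarrow> bool" where
  "countably_compact_space X \<longleftrightarrow>
    (\<forall>\<U>. countable \<U> \<longrightarrow> (\<forall>U\<in>\<U>. openin X U) \<longrightarrow> topspace X \<subseteq> \<Union>\<U>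
       \<longrightarrow> (\<exists>\<V>\<subseteq>\<U>. finite \<V> \<and> topspace X \<subseteq> \<Union>\<V>))"

definition base_at :: "'a topology \<Rightarrow> 'a \<Rightarrow> 'a set set \<Rightarrow> bool" where
  "base_at X x \<B> \<longleftrightarrow>
     (\<forall>B\<in>\<B>. openin X B \<and> x \<in> B) \<and>
     (\<forall>U. openin X U \<and> x \<in> U \<longrightarrow> (\<exists>B\<in>\<B>. B \<subseteq> U))"

end

theory Submission
  imports Defs
begin



lemma discrete_seq_False:
  assumes cc: "countably_compact_space X" and H: "Hausdorff_space X"
    and inj: "inj (r::nat \<Rightarrow> 'a)" and rX: "range r \<subseteq> topspace X"
    and nb: "\<And>x. x \<in> topspace X \<Longrightarrow> \<exists>Ob. openin X Ob \<and> x \<in> Ob \<and> (\<forall>m n. r m \<in> Ob \<longrightarrow> r n \<in> Ob \<longrightarrow> m = n)"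
  shows False
proof -
  have t1: "t1_space X" using H by (rule Hausdorff_imp_t1_space)
  define Uc where "Uc n = topspace X - r ` (UNIV - {n})" for n
  have op: "openin X (Uc n)" for n
    unfolding openin_subopen[of X "Uc n"]
  proof
    fix x assume x: "x \<in> Uc n"
    then have xX: "x \<in> topspace X" by (simp add: Uc_def)
    obtain Ob where Ob: "openin X Ob" "x \<in> Ob" "\<forall>m n. r m \<in> Ob \<longrightarrow> r n \<in> Ob \<longrightarrow> m = n"
      using nb[OF xX] by blast
    have fin: "finite {k. r k \<in> Ob}"
    proof (cases "\<exists>k. r k \<in> Ob")
      case True
      then obtain k where "r k \<in> Ob" by blast
      then have "{k. r k \<in> Ob} = {k}" using Ob(3) by blast
      then show ?thesis by simp
    next
      case False then show ?thesis by simp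
    qed
    define R where "R = r ` {k. r k \<in> Ob} - {x}"
    have "finite R" using fin by (simp add: R_def)
    moreover have "R \<subseteq> topspace X" using rX by (auto simp: R_def)
    moreover have "\<forall>S. finite S \<and> S \<subseteq> topspace X \<longrightarrow> closedin X S" using t1 by (simp add: t1_space_closedin_finite)
    ultimately have "closedin X R" by blast
    then have "openin X (Ob - R)" using Ob(1) by (simp add: openin_diff)
    moreover have "Ob - R \<subseteq> Uc n"
    proof
      fix y assume y: "y \<in> Ob - R"
      have "y \<in> topspace X" using y Ob(1) openin_subset by blast
      moreover have "y \<notin> r ` (UNIV - {n})"
      proof
        assume "y \<in> r ` (UNIV - {n})"
        then obtain k where k: "k \<noteq> n" "y = r k" by blast
        then have "y = x" using y by (auto simp: R_def)
        then show False using x k by (auto simp: Uc_def)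
      qed
      ultimately show "y \<in> Uc n" by (simp add: Uc_def)
    qed
    moreover have "x \<in> Ob - R" using Ob(2) by (simp add: R_def)
    ultimately show "\<exists>T. openin X T \<and> x \<in> T \<and> T \<subseteq> Uc n" by blast
  qed
  have cov: "topspace X \<subseteq> \<Union>(range Uc)"
  proof
    fix x assume x: "x \<in> topspace X"
    show "x \<in> \<Union>(range Uc)"
    proof (cases "x \<in> range r")
      case True
      then obtain n where n: "x = r n" by blast
      have "x \<notin> r ` (UNIV - {n})"
      proof
        assume "x \<in> r ` (UNIV - {n})"
        then obtain k where k: "k \<noteq> n" "x = r k" by blast
        from k(2) n have "r k = r n" by simp
        then have "k = n" using inj by (simp add: inj_eq)
        then show False using k(1) by simp
      qed
      then have "x \<in> Uc n" using x by (simp add: Uc_def)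
      then show ?thesis by blast
    next
      case False
      then have "x \<in> Uc 0" using x by (auto simp: Uc_def)
      then show ?thesis by blast
    qed
  qed
  have cnt: "countable (range Uc)" by simp
  have opn: "\<forall>U\<in>range Uc. openin X U" using op by blast
  have cc': "\<forall>\<U>. countable \<U> \<longrightarrow> (\<forall>U\<in>\<U>. openin X U) \<longrightarrow> topspace X \<subseteq> \<Union>\<U>
       \<longrightarrow> (\<exists>\<V>\<subseteq>\<U>. finite \<V> \<and> topspace X \<subseteq> \<Union>\<V>)"
    using cc by (simp add: countably_compact_space_def)
  obtain V where V: "V \<subseteq> range Uc" "finite V" "topspace X \<subseteq> \<Union>V"
    using cc'[rule_format, OF cnt _ cov] opn by blast
  obtain M where M: "finite M" "V = Uc ` M" using finite_subset_image[OF V(2) V(1)] by blast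
  obtain k :: nat where k: "k \<notin> M" using ex_new_if_finite[OF infinite_UNIV_nat M(1)] by blast
  have "r k \<in> topspace X" using rX by blast
  then have "r k \<in> \<Union>V" using V(3) by blast
  then obtain n where n: "n \<in> M" "r k \<in> Uc n" using M(2) by blast
  then have "k \<noteq> n" using k by blast
  then have "r k \<in> r ` (UNIV - {n})" by blast
  then show False using n(2) by (simp add: Uc_def)
qed

fun Qp :: "('g,'b) monoid_scheme \<Rightarrow> (nat \<Rightarrow> 'g) \<Rightarrow> nat \<Rightarrow> nat \<Rightarrow> 'g" where
  "Qp M g m 0 = \<one>\<^bsub>M\<^esub>"
| "Qp M g m (Suc l) = g m \<otimes>\<^bsub>M\<^esub> Qp M g (Suc m) l"

lemma (in group) Qp_closed: "(\<And>k. g k \<in> carrier G) \<Longrightarrow> Qp G g m l \<in> carrier G"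
  by (induction l arbitrary: m) auto

lemma (in group) Qp_add: "(\<And>k. g k \<in> carrier G) \<Longrightarrow> Qp G g k (m + l) = Qp G g k m \<otimes> Qp G g (k + m) l"
proof (induction m arbitrary: k)
  case 0 then show ?case using Qp_closed by simp
next
  case (Suc m)
  have "Qp G g k (Suc m + l) = g k \<otimes> (Qp G g (Suc k) m \<otimes> Qp G g (Suc k + m) l)"
    using Suc by simp
  also have "\<dots> = (g k \<otimes> Qp G g (Suc k) m) \<otimes> Qp G g (Suc k + m) l"
    using Suc.prems Qp_closed by (simp add: m_assoc)
  finally show ?case by simp
qed

locale psetting =
  fixes I :: "'i set" and Lam :: "'i \<Rightarrow> 'l set" and G :: "'i \<Rightarrow> 'g monoid"
    and X :: "('i \<times> 'l \<times> 'g \<times> 'l) option topology"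
  assumes groups: "\<And>i. i \<in> I \<Longrightarrow> group (G i)"
    and carrier: "topspace X = osum_carrier I Lam G"
    and haus: "Hausdorff_space X"
    and cont: "continuous_map (prod_topology X X) X (\<lambda>(x, y). osum_mult G x y)"
    and ccpt: "countably_compact_space X"
begin

abbreviation mm where "mm \<equiv> osum_mult G"

lemma None_top: "None \<in> topspace X" by (simp add: carrier osum_carrier_def)

lemma Some_top: "Some (j,c,g,d) \<in> topspace X \<longleftrightarrow> j \<in> I \<and> c \<in> Lam j \<and> d \<in> Lam j \<and> g \<in> carrier (G j)"
  by (auto simp: carrier osum_carrier_def)

lemma mm_top: assumes "x \<in> topspace X" "y \<in> topspace X" shows "mm x y \<in> topspace X"
proof -
  have "(\<lambda>(x, y). mm x y) (x,y) \<in> topspace X"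
    by (rule Pi_mem[OF continuous_map_funspace[OF cont]]) (simp add: assms)
  then show ?thesis by simp
qed

lemma cont_left: assumes t: "t \<in> topspace X" shows "continuous_map X X (\<lambda>y. mm t y)"
proof -
  have "continuous_map X (prod_topology X X) (\<lambda>y. (t, y))"
    using t continuous_map_id by (simp add: continuous_map_paired id_def)
  from continuous_map_compose[OF this cont] show ?thesis by (simp add: o_def)
qed

lemma cont_right: assumes t: "t \<in> topspace X" shows "continuous_map X X (\<lambda>y. mm y t)"
proof -
  have "continuous_map X (prod_topology X X) (\<lambda>y. (y, t))"
    using t continuous_map_id by (simp add: continuous_map_paired id_def)
  from continuous_map_compose[OF this cont] show ?thesis by (simp add: o_def)
qed

lemma cont_at:
  assumes "x \<in> topspace X" "y \<in> topspace X" "openin X W" "mm x y \<in> W"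
  shows "\<exists>A B. openin X A \<and> openin X B \<and> x \<in> A \<and> y \<in> B \<and> (\<forall>u\<in>A. \<forall>v\<in>B. mm u v \<in> W)"
proof -
  let ?P = "{z \<in> topspace (prod_topology X X). (\<lambda>(x, y). mm x y) z \<in> W}"
  have P: "openin (prod_topology X X) ?P"
    by (rule openin_continuous_map_preimage[OF cont assms(3)])
  have xy: "(x,y) \<in> ?P" using assms by simp
  obtain A B where AB: "openin X A" "openin X B" "x \<in> A" "y \<in> B" "A \<times> B \<subseteq> ?P"
    using P[unfolded openin_prod_topology_alt, rule_format, OF xy] by blast
  have "\<forall>u\<in>A. \<forall>v\<in>B. mm u v \<in> W"
  proof (intro ballI)
    fix u v assume "u \<in> A" "v \<in> B"
    then have "(u,v) \<in> ?P" using AB(5) by blast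
    then show "mm u v \<in> W" by simp
  qed
  then show ?thesis using AB by blast
qed

lemma cell_sub: "cell G i a b \<subseteq> topspace X" if "i \<in> I" "a \<in> Lam i" "b \<in> Lam i"
  using that by (auto simp: cell_def Some_top)

lemma cell_disj: "x \<in> cell G i a b \<Longrightarrow> x \<in> cell G j c d \<Longrightarrow> (i,a,b) = (j,c,d)"
  by (auto simp: cell_def)

lemma top_cases: "x \<in> topspace X \<Longrightarrow> x = None \<or> (\<exists>j c g d. x = Some (j,c,g,d) \<and> j \<in> I \<and> c \<in> Lam j \<and> d \<in> Lam j \<and> x \<in> cell G j c d)"
  by (auto simp: carrier osum_carrier_def cell_def)

lemma t1: "t1_space X" using haus by (rule Hausdorff_imp_t1_space)

lemma cell_open: assumes ia: "i \<in> I" "a \<in> Lam i" "b \<in> Lam i" shows "openin X (cell G i a b)"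
proof -
  interpret Gi: group "G i" by (rule groups[OF ia(1)])
  let ?e = "Some (i, a, \<one>\<^bsub>G i\<^esub>, a)" and ?f = "Some (i, b, \<one>\<^bsub>G i\<^esub>, b)"
  have e: "?e \<in> topspace X" "?f \<in> topspace X" using ia by (auto simp: Some_top)
  have c: "continuous_map X X (\<lambda>y. mm (mm ?e y) ?f)"
    using continuous_map_compose[OF cont_left[OF e(1)] cont_right[OF e(2)]] unfolding o_def .
  have "closedin X {None}" using t1 None_top unfolding t1_space_closedin_singleton by blast
  then have o: "openin X (topspace X - {None})" by (simp add: openin_diff)
  have "openin X {y \<in> topspace X. mm (mm ?e y) ?f \<in> topspace X - {None}}"
    by (rule openin_continuous_map_preimage[OF c o])
  moreover have "{y \<in> topspace X. mm (mm ?e y) ?f \<in> topspace X - {None}} = cell G i a b"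
  proof (rule subset_antisym; rule subsetI)
    fix y assume y: "y \<in> {y \<in> topspace X. mm (mm ?e y) ?f \<in> topspace X - {None}}"
    then have yX: "y \<in> topspace X" and ne: "mm (mm ?e y) ?f \<noteq> None" by auto
    from top_cases[OF yX] show "y \<in> cell G i a b"
    proof
      assume "y = None" then show ?thesis using ne by simp
    next
      assume "\<exists>j c g d. y = Some (j,c,g,d) \<and> j \<in> I \<and> c \<in> Lam j \<and> d \<in> Lam j \<and> y \<in> cell G j c d"
      then obtain j c g d where "y = Some (j,c,g,d)" "y \<in> cell G j c d" by blast
      then show ?thesis using ne by (auto simp: cell_def split: if_splits)
    qed
  next
    fix y assume y: "y \<in> cell G i a b"
    then obtain g where g: "y = Some (i,a,g,b)" "g \<in> carrier (G i)" by (auto simp: cell_def)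
    have yX: "y \<in> topspace X" using y cell_sub ia by blast
    have "mm (mm ?e y) ?f \<in> topspace X" using mm_top e yX by blast
    moreover have "mm (mm ?e y) ?f \<noteq> None" using g by simp
    ultimately show "y \<in> {y \<in> topspace X. mm (mm ?e y) ?f \<in> topspace X - {None}}" using yX by simp
  qed
  ultimately show ?thesis by simp
qed

end



context psetting begin

lemma zero_sep_diag:
  assumes i: "i \<in> I" and a: "a \<in> Lam i"
  shows "\<exists>U. openin X U \<and> None \<in> U \<and> U \<inter> cell G i a a = {}"
proof (rule ccontr)
  assume nc: "\<not> ?thesis"
  have hit: "\<exists>g \<in> carrier (G i). Some (i,a,g,a) \<in> U" if "openin X U" "None \<in> U" for U
  proof -
    have "U \<inter> cell G i a a \<noteq> {}" using nc that by blast
    then obtain y where "y \<in> U" "y \<in> cell G i a a" by blast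
    then show ?thesis by (auto simp: cell_def)
  qed
  interpret Gi: group "G i" by (rule groups[OF i])
  define emb :: "'g \<Rightarrow> ('i \<times> 'l \<times> 'g \<times> 'l) option" where "emb g = Some (i,a,g,a)" for g
  have emb_top: "emb g \<in> topspace X" if "g \<in> carrier (G i)" for g using i a that by (simp add: emb_def Some_top)
  have emb_mult: "mm (emb g) (emb h) = emb (g \<otimes>\<^bsub>G i\<^esub> h)" for g h by (simp add: emb_def)
  have emb_cell: "emb g \<in> cell G i a a" if "g \<in> carrier (G i)" for g using that by (simp add: emb_def cell_def)
  define e where "e = emb \<one>\<^bsub>G i\<^esub>"
  have eX: "e \<in> topspace X" using emb_top by (simp add: e_def)
  have eN: "e \<noteq> None" by (simp add: e_def emb_def)
  obtain V W0 where VW: "openin X V" "openin X W0" "e \<in> V" "None \<in> W0" "V \<inter> W0 = {}"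
    using haus[unfolded Hausdorff_space_def, rule_format, of e None] eX None_top eN
    by (auto simp: disjnt_def)
  obtain U0 U1 where U: "openin X U0" "openin X U1" "None \<in> U0" "None \<in> U1" "\<forall>u\<in>U0. \<forall>v\<in>U1. mm u v \<in> W0"
    using cont_at[OF None_top None_top VW(2)] VW(4) by (simp only: osum_mult.simps) blast
  obtain A1 N1 where AN: "openin X A1" "openin X N1" "None \<in> A1" "e \<in> N1" "\<forall>u\<in>A1. \<forall>v\<in>N1. mm u v \<in> W0"
    using cont_at[OF None_top eX VW(2)] VW(4) by (simp only: osum_mult.simps) blast
  define N where "N = N1 \<inter> V"
  have No: "openin X N" "e \<in> N" using AN VW by (auto simp: N_def)
  define B0 where "B0 = U0 \<inter> A1"
  have B0: "openin X B0" "None \<in> B0" using U AN by (auto simp: B0_def)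
  define step where "step S = (SOME C. openin X C \<and> None \<in> C \<and> C \<subseteq> S \<and> (\<forall>u\<in>C. \<forall>v\<in>C. mm u v \<in> S))" for S
  have step: "openin X (step S) \<and> None \<in> step S \<and> step S \<subseteq> S \<and> (\<forall>u\<in>step S. \<forall>v\<in>step S. mm u v \<in> S)"
    if S: "openin X S" "None \<in> S" for S
  proof -
    obtain A B where "openin X A" "openin X B" "None \<in> A" "None \<in> B" "\<forall>u\<in>A. \<forall>v\<in>B. mm u v \<in> S"
      using cont_at[OF None_top None_top S(1)] S(2) by auto
    then have "\<exists>C. openin X C \<and> None \<in> C \<and> C \<subseteq> S \<and> (\<forall>u\<in>C. \<forall>v\<in>C. mm u v \<in> S)"
      using S by (intro exI[of _ "A \<inter> B \<inter> S"] conjI openin_Int) blast+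
    then show ?thesis unfolding step_def by (rule someI_ex)
  qed
  define B where "B k = (step ^^ k) B0" for k
  have Bs: "B (Suc k) = step (B k)" for k by (simp add: B_def)
  have Bo: "openin X (B k) \<and> None \<in> B k" for k
  proof (induction k)
    case 0 then show ?case using B0 by (simp add: B_def)
  next
    case (Suc k)
    then have "openin X (B k)" "None \<in> B k" by auto
    from step[OF this] show ?case unfolding Bs by blast
  qed
  have Bsuc: "B (Suc k) \<subseteq> B k" "\<forall>u\<in>B (Suc k). \<forall>v\<in>B (Suc k). mm u v \<in> B k" for k
  proof -
    have "openin X (B k)" "None \<in> B k" using Bo[of k] by auto
    from step[OF this] show "B (Suc k) \<subseteq> B k" "\<forall>u\<in>B (Suc k). \<forall>v\<in>B (Suc k). mm u v \<in> B k"
      unfolding Bs by blast+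
  qed
  have Bmono: "B k \<subseteq> B 0" for k
  proof (induction k)
    case 0 then show ?case by simp
  next
    case (Suc k) then show ?case using Bsuc(1)[of k] by blast
  qed
  have "\<forall>k. \<exists>x. x \<in> carrier (G i) \<and> emb x \<in> B (Suc k)" using hit Bo by (auto simp: emb_def)
  from choice[OF this] obtain g where g0: "\<forall>k. g k \<in> carrier (G i) \<and> emb (g k) \<in> B (Suc k)" by blast
  have g: "\<And>k. g k \<in> carrier (G i)" "\<And>k. emb (g k) \<in> B (Suc k)" using g0 by auto
  let ?Q = "Qp (G i) g"
  have Qc: "?Q m l \<in> carrier (G i)" for m l using Gi.Qp_closed g(1) by blast
  have QB: "\<And>m. l \<ge> 1 \<Longrightarrow> emb (?Q m l) \<in> B m" for l
  proof (induction l)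
    case 0 then show ?case by simp
  next
    case (Suc l)
    { fix m
      have "emb (?Q m (Suc l)) \<in> B m"
      proof (cases "l = 0")
        case True
        have "?Q m (Suc l) = g m" using True g(1)[of m] by simp
        then show ?thesis using g(2)[of m] Bsuc(1)[of m] by auto
      next
        case False
        then have "emb (?Q (Suc m) l) \<in> B (Suc m)" using Suc.IH[of "Suc m"] by simp
        then have "mm (emb (g m)) (emb (?Q (Suc m) l)) \<in> B m" using Bsuc(2)[of m] g(2)[of m] by blast
        then show ?thesis by (simp add: emb_mult)
      qed }
    then show ?case by blast
  qed
  define p where "p n = ?Q 0 (Suc n)" for n
  define r where "r n = inv\<^bsub>G i\<^esub> (p n)" for n
  have pc: "p n \<in> carrier (G i)" for n unfolding p_def by (rule Qc)
  have rc: "r n \<in> carrier (G i)" for n using pc by (simp add: r_def)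
  define q where "q m n = ?Q (Suc m) (n - m)" for m n
  have qc: "q m n \<in> carrier (G i)" for m n unfolding q_def by (rule Qc)
  have rel: "r m = q m n \<otimes>\<^bsub>G i\<^esub> r n" if "m < n" for m n
  proof -
    have "p n = p m \<otimes>\<^bsub>G i\<^esub> q m n"
      using Gi.Qp_add[of g 0 "Suc m" "n - m"] g(1) that by (simp add: p_def q_def)
    then have "r n = inv\<^bsub>G i\<^esub> (q m n) \<otimes>\<^bsub>G i\<^esub> r m"
      using pc qc by (simp add: r_def Gi.inv_mult_group)
    then show ?thesis using qc rc by (simp add: Gi.m_assoc[symmetric])
  qed
  have B0eq: "B 0 = B0" by (simp add: B_def)
  have qB0: "emb (q m n) \<in> B0" if "m < n" for m n
  proof -
    have "emb (q m n) \<in> B (Suc m)" using QB[of "n - m" "Suc m"] that unfolding q_def by simp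
    then show ?thesis using Bmono[of "Suc m"] B0eq by blast
  qed
  have rU1: "emb (r n) \<notin> U1" for n
  proof
    assume "emb (r n) \<in> U1"
    moreover have "emb (p n) \<in> U0" using QB[of "Suc n" 0] B0eq by (simp add: p_def B0_def)
    ultimately have "mm (emb (p n)) (emb (r n)) \<in> W0" using U(5) by blast
    then have "e \<in> W0" using pc by (simp add: emb_mult r_def e_def)
    then show False using VW by blast
  qed
  have key: "emb (q m n \<otimes>\<^bsub>G i\<^esub> x) \<notin> N" if "m < n" "x \<in> carrier (G i)" "emb x \<in> N" for m n x
  proof
    assume "emb (q m n \<otimes>\<^bsub>G i\<^esub> x) \<in> N"
    moreover have "emb (q m n) \<in> A1" using qB0[OF that(1)] by (simp add: B0_def)
    moreover have "emb x \<in> N1" using that(3) by (simp add: N_def)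
    ultimately have "mm (emb (q m n)) (emb x) \<in> W0" using AN(5) by blast
    then have "emb (q m n \<otimes>\<^bsub>G i\<^esub> x) \<in> W0" by (simp add: emb_mult)
    moreover have "emb (q m n \<otimes>\<^bsub>G i\<^esub> x) \<in> V" using \<open>emb (q m n \<otimes>\<^bsub>G i\<^esub> x) \<in> N\<close> by (simp add: N_def)
    ultimately show False using VW(5) by blast
  qed
  have rinj: "inj (\<lambda>n. emb (r n))"
  proof (rule linorder_injI)
    fix m n :: nat assume mn: "m < n"
    show "emb (r m) \<noteq> emb (r n)"
    proof
      assume "emb (r m) = emb (r n)"
      then have "r m = r n" by (simp add: emb_def)
      then have "q m n = \<one>\<^bsub>G i\<^esub>" using rel[OF mn] qc rc by simp
      then show False using key[OF mn Gi.one_closed] No(2) by (simp add: e_def)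
    qed
  qed
  show False
  proof (rule discrete_seq_False[OF ccpt haus rinj])
    show "range (\<lambda>n. emb (r n)) \<subseteq> topspace X" using emb_top rc by blast
  next
    fix x assume xX: "x \<in> topspace X"
    from top_cases[OF xX]
    show "\<exists>Ob. openin X Ob \<and> x \<in> Ob \<and> (\<forall>m n. emb (r m) \<in> Ob \<longrightarrow> emb (r n) \<in> Ob \<longrightarrow> m = n)"
    proof
      assume "x = None"
      then show ?thesis using U rU1 by blast
    next
      assume "\<exists>j c g d. x = Some (j,c,g,d) \<and> j \<in> I \<and> c \<in> Lam j \<and> d \<in> Lam j \<and> x \<in> cell G j c d"
      then obtain j c h d where x: "x = Some (j,c,h,d)" "j \<in> I" "c \<in> Lam j" "d \<in> Lam j" "x \<in> cell G j c d"
        by blast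
      show ?thesis
      proof (cases "(j,c,d) = (i,a,a)")
        case False
        have "emb (r n) \<notin> cell G j c d" for n
          using cell_disj[OF emb_cell[OF rc[of n]]] False by blast
        then show ?thesis using cell_open[OF x(2-4)] x(5) by blast
      next
        case True
        then have hc: "h \<in> carrier (G i)" and xe: "x = emb h" using x by (auto simp: cell_def emb_def)
        define Ob where "Ob = {y \<in> topspace X. mm y (emb (inv\<^bsub>G i\<^esub> h)) \<in> N}"
        have "openin X Ob" unfolding Ob_def
          by (rule openin_continuous_map_preimage[OF cont_right No(1)]) (use emb_top hc in simp)
        moreover have "x \<in> Ob" using xX xe hc No(2) by (simp add: Ob_def emb_mult e_def)
        moreover have False if "m < n" "emb (r m) \<in> Ob" "emb (r n) \<in> Ob" for m n
        proof -
          have "emb (r n \<otimes>\<^bsub>G i\<^esub> inv\<^bsub>G i\<^esub> h) \<in> N" using that(3) by (simp add: Ob_def emb_mult)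
          from key[OF that(1) _ this] have "emb (q m n \<otimes>\<^bsub>G i\<^esub> (r n \<otimes>\<^bsub>G i\<^esub> inv\<^bsub>G i\<^esub> h)) \<notin> N"
            using rc hc by simp
          moreover have "emb (r m \<otimes>\<^bsub>G i\<^esub> inv\<^bsub>G i\<^esub> h) \<in> N" using that(2) by (simp add: Ob_def emb_mult)
          ultimately show False using rel[OF that(1)] qc rc hc by (simp add: Gi.m_assoc)
        qed
        moreover have "\<forall>m n. emb (r m) \<in> Ob \<longrightarrow> emb (r n) \<in> Ob \<longrightarrow> m = n"
        proof (intro allI impI)
          fix m n assume mn: "emb (r m) \<in> Ob" "emb (r n) \<in> Ob"
          show "m = n"
          proof (rule linorder_cases[of m n])
            assume "m < n" then show ?thesis using calculation(3) mn by blast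
          next
            assume "n < m" then show ?thesis using calculation(3) mn by blast
          qed
        qed
        ultimately show ?thesis by blast
      qed
    qed
  qed
qed

end

context psetting begin

lemma zero_sep:
  assumes ia: "i \<in> I" "a \<in> Lam i" "b \<in> Lam i"
  shows "\<exists>U. openin X U \<and> None \<in> U \<and> U \<inter> cell G i a b = {}"
proof (rule ccontr)
  assume nc: "\<not> ?thesis"
  interpret Gi: group "G i" by (rule groups[OF ia(1)])
  let ?t = "Some (i, b, \<one>\<^bsub>G i\<^esub>, a)"
  have tX: "?t \<in> topspace X" using ia by (simp add: Some_top)
  obtain U where U: "openin X U" "None \<in> U" "U \<inter> cell G i a a = {}"
    using zero_sep_diag[OF ia(1,2)] by blast
  let ?P = "{y \<in> topspace X. mm y ?t \<in> U}"
  have "openin X ?P" by (rule openin_continuous_map_preimage[OF cont_right[OF tX] U(1)])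
  moreover have "None \<in> ?P" using None_top U(2) by simp
  ultimately have "?P \<inter> cell G i a b \<noteq> {}" using nc by blast
  then obtain y where y: "y \<in> ?P" "y \<in> cell G i a b" by blast
  then obtain g where g: "y = Some (i,a,g,b)" "g \<in> carrier (G i)" by (auto simp: cell_def)
  have "mm y ?t \<in> U" using y(1) by simp
  moreover have "mm y ?t \<in> cell G i a a" using g by (simp add: cell_def)
  ultimately show False using U(3) by blast
qed

lemma cell_closed:
  assumes ia: "i \<in> I" "a \<in> Lam i" "b \<in> Lam i"
  shows "closedin X (cell G i a b)"
  unfolding closedin_def
proof
  show "cell G i a b \<subseteq> topspace X" by (rule cell_sub[OF ia])
  show "openin X (topspace X - cell G i a b)"
    unfolding openin_subopen[of X "topspace X - cell G i a b"]
  proof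
    fix x assume x: "x \<in> topspace X - cell G i a b"
    then have xX: "x \<in> topspace X" by blast
    from top_cases[OF xX]
    show "\<exists>T. openin X T \<and> x \<in> T \<and> T \<subseteq> topspace X - cell G i a b"
    proof
      assume xN: "x = None"
      obtain U where U: "openin X U" "None \<in> U" "U \<inter> cell G i a b = {}"
        using zero_sep[OF ia] by blast
      have "U \<subseteq> topspace X" using U(1) by (rule openin_subset)
      then show ?thesis using U xN by blast
    next
      assume "\<exists>j c g d. x = Some (j,c,g,d) \<and> j \<in> I \<and> c \<in> Lam j \<and> d \<in> Lam j \<and> x \<in> cell G j c d"
      then obtain j c g d where jc: "j \<in> I" "c \<in> Lam j" "d \<in> Lam j" "x \<in> cell G j c d" by blast
      have dis: "cell G j c d \<inter> cell G i a b = {}"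
      proof (rule ccontr)
        assume "cell G j c d \<inter> cell G i a b \<noteq> {}"
        then obtain y where "y \<in> cell G j c d" "y \<in> cell G i a b" by blast
        then have "(j,c,d) = (i,a,b)" by (rule cell_disj)
        then show False using jc(4) x by simp
      qed
      show ?thesis using cell_open[OF jc(1-3)] jc(4) cell_sub[OF jc(1-3)] dis by blast
    qed
  qed
qed

lemma cellt_disj: "x \<in> (\<lambda>(i,a,b). cell G i a b) s \<Longrightarrow> x \<in> (\<lambda>(i,a,b). cell G i a b) s' \<Longrightarrow> s = s'"
  by (cases s; cases s') (auto dest: cell_disj)

end

theorem theorem3p10:
  fixes I :: "'i set" and Lam :: "'i \<Rightarrow> 'l set" and G :: "'i \<Rightarrow> 'g monoid"
    and X :: "('i \<times> 'l \<times> 'g \<times> 'l) option topology"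
  assumes groups: "\<And>i. i \<in> I \<Longrightarrow> group (G i)"
    and Lam_ne: "\<And>i. i \<in> I \<Longrightarrow> Lam i \<noteq> {}"
    and carrier: "topspace X = osum_carrier I Lam G"
    and haus: "Hausdorff_space X"
    and cont: "continuous_map (prod_topology X X) X (\<lambda>(x, y). osum_mult G x y)"
    and ccpt: "countably_compact_space X"
  shows "base_at X None
           {topspace X - (\<Union>(i, a, b)\<in>F. cell G i a b) | F.
              finite F \<and> F \<subseteq> {(i, a, b). i \<in> I \<and> a \<in> Lam i \<and> b \<in> Lam i}}"
proof -
  interpret psetting I Lam G X by (rule psetting.intro[OF groups carrier haus cont ccpt])
  let ?Idx = "{(i, a, b). i \<in> I \<and> a \<in> Lam i \<and> b \<in> Lam i}"
  let ?C = "\<lambda>(i,a,b). cell G i a b"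
  show ?thesis unfolding base_at_def
  proof (rule conjI; intro ballI allI impI)
    fix B assume "B \<in> {topspace X - (\<Union>(i, a, b)\<in>F. cell G i a b) | F. finite F \<and> F \<subseteq> ?Idx}"
    then obtain F where F: "finite F" "F \<subseteq> ?Idx" "B = topspace X - (\<Union>(?C ` F))" by blast
    have "closedin X (\<Union>(?C ` F))"
    proof (rule closedin_Union)
      show "finite (?C ` F)" using F(1) by simp
    next
      fix T assume "T \<in> ?C ` F"
      then obtain i a b where iab: "(i,a,b) \<in> F" "T = cell G i a b" by auto
      then have "i \<in> I" "a \<in> Lam i" "b \<in> Lam i" using F(2) by auto
      then show "closedin X T" using iab(2) cell_closed by blast
    qed
    then have "openin X B" using F(3) by (simp add: openin_diff)
    moreover have "None \<in> B" using F(3) None_top by (auto simp: cell_def)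
    ultimately show "openin X B \<and> None \<in> B" by blast
  next
    fix U assume U: "openin X U \<and> None \<in> U"
    define F where "F = {t \<in> ?Idx. ?C t \<inter> (topspace X - U) \<noteq> {}}"
    have finF: "finite F"
    proof (rule ccontr)
      assume "infinite F"
      then obtain t :: "nat \<Rightarrow> _" where t: "inj t" "range t \<subseteq> F"
        using infinite_countable_subset by blast
      have "\<forall>n. \<exists>y. y \<in> ?C (t n) \<inter> (topspace X - U)"
      proof
        fix n
        have "t n \<in> F" using t(2) by blast
        then have "?C (t n) \<inter> (topspace X - U) \<noteq> {}" unfolding F_def by blast
        then show "\<exists>y. y \<in> ?C (t n) \<inter> (topspace X - U)" by (simp only: ex_in_conv not_False_eq_True)
      qed
      from choice[OF this] obtain r where r: "\<forall>n. r n \<in> ?C (t n) \<inter> (topspace X - U)" by blast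
      have rC: "r n \<in> ?C (t n)" for n using r[rule_format, of n] by (rule IntD1)
      have rU: "r n \<in> topspace X - U" for n using r[rule_format, of n] by (rule IntD2)
      have rinj: "inj r"
      proof (rule injI)
        fix m n assume mn: "r m = r n"
        have a1: "r m \<in> ?C (t m)" by (rule rC)
        have a2: "r n \<in> ?C (t n)" by (rule rC)
        have "t m = t n" by (rule cellt_disj[OF a1 a2[folded mn]])
        then show "m = n" using t(1) by (simp add: inj_eq)
      qed
      show False
      proof (rule discrete_seq_False[OF ccpt haus rinj])
        show "range r \<subseteq> topspace X" using rU by blast
      next
        fix x assume xX: "x \<in> topspace X"
        from top_cases[OF xX]
        show "\<exists>Ob. openin X Ob \<and> x \<in> Ob \<and> (\<forall>m n. r m \<in> Ob \<longrightarrow> r n \<in> Ob \<longrightarrow> m = n)"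
        proof
          assume "x = None"
          moreover have "r n \<notin> U" for n using rU by blast
          ultimately show ?thesis using U by blast
        next
          assume "\<exists>j c g d. x = Some (j,c,g,d) \<and> j \<in> I \<and> c \<in> Lam j \<and> d \<in> Lam j \<and> x \<in> cell G j c d"
          then obtain j c g d where jc: "j \<in> I" "c \<in> Lam j" "d \<in> Lam j" "x \<in> cell G j c d" by blast
          have "m = n" if "r m \<in> cell G j c d" "r n \<in> cell G j c d" for m n
          proof -
            have a1: "r m \<in> ?C (t m)" by (rule rC)
            have a2: "r n \<in> ?C (t n)" by (rule rC)
            have b1: "r m \<in> ?C (j,c,d)" using that(1) by simp
            have b2: "r n \<in> ?C (j,c,d)" using that(2) by simp
            have "t m = (j,c,d)" by (rule cellt_disj[OF a1 b1])
            moreover have "t n = (j,c,d)" by (rule cellt_disj[OF a2 b2])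
            ultimately have "t m = t n" by simp
            then show "m = n" using t(1) by (simp add: inj_eq)
          qed
          then show ?thesis using cell_open[OF jc(1-3)] jc(4) by blast
        qed
      qed
    qed
    have FI: "F \<subseteq> ?Idx" by (auto simp: F_def)
    have sub: "topspace X - (\<Union>(?C ` F)) \<subseteq> U"
    proof
      fix x assume x: "x \<in> topspace X - (\<Union>(?C ` F))"
      show "x \<in> U"
      proof (rule ccontr)
        assume xU: "x \<notin> U"
        have xX: "x \<in> topspace X" using x by blast
        from top_cases[OF xX] show False
        proof
          assume "x = None" then show False using U xU by blast
        next
          assume "\<exists>j c g d. x = Some (j,c,g,d) \<and> j \<in> I \<and> c \<in> Lam j \<and> d \<in> Lam j \<and> x \<in> cell G j c d"
          then obtain j c g d where jc: "j \<in> I" "c \<in> Lam j" "d \<in> Lam j" "x \<in> cell G j c d" by blast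
          then have "(j,c,d) \<in> F" using xX xU by (auto simp: F_def)
          then have "x \<in> \<Union>(?C ` F)" using jc(4) by force
          then show False using x by blast
        qed
      qed
    qed
    show "\<exists>B\<in>{topspace X - (\<Union>(i, a, b)\<in>F. cell G i a b) | F. finite F \<and> F \<subseteq> ?Idx}. B \<subseteq> U"
      using finF FI sub by blast
  qed
qed

end
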